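(* Let $N\ge1$, $p\ge2$, $w,g\in L^1_{loc}(\mathbb{R}^N)$ positive a.e. with $g^{-1}\in L^\infty(\mathbb{R}^N)$. Let $M$ be a constant with $M>0$ if $p=2$ and $0<M<\frac{4}{(p-1)^2}$ if $p>2$. Assume there exist constants $\mu>0$ and $C>0$ such that $\mu<pT_p$ and $\int_{B_{2R}(0)}w^{T_p}dx\le CR^{\mu}$ for all $R\ge1$. Then there is no $u\in C^1(\mathbb{R}^N)$ with $u>0$ and $\|u\|_{L^\infty(\mathbb{R}^N)}\le M$ which is a stable weak solution of $\operatorname{div}(w|\nabla u|^{p-2}\nabla u)=g(x)e^{1/u}$ in $\mathbb{R}^N$.
   Context: Weak solution and stability are with respect to $f(t)=-e^{1/t}$ and the equation $-\operatorname{div}(w|\nabla u|^{p-2}\nabla u)=gf(u)$: $u\in C^1$ is a weak solution if $\int w|\nabla u|^{p-2}\nabla u\cdot\nabla\varphi=\int gf(u)\varphi$ for all $\varphi\in C^1_c(\mathbb{R}^N)$; it is stable if for all $\varphi\in C^1_c(\mathbb{R}^N)$, $\int w|\nabla u|^{p-2}|\nabla\varphi|^2+(p-2)\int w|\nabla u|^{p-4}(\nabla u\cdot\nabla\varphi)^2-\int gf'(u)\varphi^2\ge0$ (middle integrand $=0$ where $\nabla u=0$). $t_p=\frac1M+\sqrt{\frac1M+\frac1{M^2}}$ if $p=2$, and $t_p=\frac{2}{M(p-1)}-\frac{p-1}{2}$ if $p>2$; $T_p=1+\frac{2t_p}{p}$. $B_r(0)$ is the open ball of radius $r$ centered at the origin.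 *)

theory Defs
  imports "HOL-Analysis.Analysis"
begin

definition grad :: "('a::euclidean_space \<Rightarrow> real) \<Rightarrow> 'a \<Rightarrow> 'a" where
  "grad u x = (SOME D. GDERIV u x :> D)"

definition C1_fun :: "('a::euclidean_space \<Rightarrow> real) \<Rightarrow> bool" where
  "C1_fun u \<longleftrightarrow> (\<forall>x. u differentiable (at x)) \<and> continuous_on UNIV (grad u)"

definition C1c_fun :: "('a::euclidean_space \<Rightarrow> real) \<Rightarrow> bool" where
  "C1c_fun \<phi> \<longleftrightarrow> C1_fun \<phi> \<and> compact (closure {x. \<phi> x \<noteq> 0})"

definition L1_loc :: "('a::euclidean_space \<Rightarrow> real) \<Rightarrow> bool" where
  "L1_loc w \<longleftrightarrow> (\<forall>K. compact K \<longrightarrow> set_integrable lebesgue K w)"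

definition Linf :: "('a::euclidean_space \<Rightarrow> real) \<Rightarrow> bool" where
  "Linf h \<longleftrightarrow> h \<in> borel_measurable lebesgue \<and> (\<exists>B. AE x in lebesgue. \<bar>h x\<bar> \<le> B)"

(* real power t^a for t \<ge> 0 with the convention t^0 = 1 (also for t = 0) *)
definition rpow :: "real \<Rightarrow> real \<Rightarrow> real" where
  "rpow t a = (if a = 0 then 1 else t powr a)"

definition fnl :: "real \<Rightarrow> real" where
  "fnl t = - exp (1 / t)"

(* weak solution of -div(w |\<nabla>u|^{p-2} \<nabla>u) = g f(u) *)
definition weak_solution ::
  "real \<Rightarrow> ('a::euclidean_space \<Rightarrow> real) \<Rightarrow> ('a \<Rightarrow> real) \<Rightarrow> ('a \<Rightarrow> real) \<Rightarrow> bool" where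
  "weak_solution p w g u \<longleftrightarrow> C1_fun u \<and>
     (\<forall>\<phi>. C1c_fun \<phi> \<longrightarrow>
        (\<integral>x. w x * rpow (norm (grad u x)) (p - 2) * (grad u x \<bullet> grad \<phi> x) \<partial>lebesgue)
      = (\<integral>x. g x * fnl (u x) * \<phi> x \<partial>lebesgue))"

definition stable ::
  "real \<Rightarrow> ('a::euclidean_space \<Rightarrow> real) \<Rightarrow> ('a \<Rightarrow> real) \<Rightarrow> ('a \<Rightarrow> real) \<Rightarrow> bool" where
  "stable p w g u \<longleftrightarrow>
     (\<forall>\<phi>. C1c_fun \<phi> \<longrightarrow>
        (\<integral>x. w x * rpow (norm (grad u x)) (p - 2) * (norm (grad \<phi> x))\<^sup>2 \<partial>lebesgue)
      + (p - 2) * (\<integral>x. (if grad u x = 0 then 0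
                      else w x * norm (grad u x) powr (p - 4) * (grad u x \<bullet> grad \<phi> x)\<^sup>2) \<partial>lebesgue)
      - (\<integral>x. g x * deriv fnl (u x) * (\<phi> x)\<^sup>2 \<partial>lebesgue) \<ge> 0)"

definition t_p :: "real \<Rightarrow> real \<Rightarrow> real" where
  "t_p M p = (if p = 2 then 1 / M + sqrt (1 / M + 1 / M\<^sup>2)
              else 2 / (M * (p - 1)) - (p - 1) / 2)"

definition T_p :: "real \<Rightarrow> real \<Rightarrow> real" where
  "T_p M p = 1 + 2 * t_p M p / p"

end

theory Submission
  imports Defs
begin


lemma gderiv_unique:
  fixes f :: "'a::euclidean_space \<Rightarrow> real"
  assumes "GDERIV f x :> D" "GDERIV f x :> D'" shows "D = D'"
proof -
  have "(\<lambda>h. h \<bullet> D) = (\<lambda>h. h \<bullet> D')"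
    using assms unfolding gderiv_def by (rule has_derivative_unique)
  then have "(D - D') \<bullet> D = (D - D') \<bullet> D'" by metis
  then have "(D - D') \<bullet> (D - D') = 0" by (simp add: inner_diff_right)
  then show ?thesis by simp
qed

lemma grad_eq:
  fixes f :: "'a::euclidean_space \<Rightarrow> real"
  assumes "GDERIV f x :> D" shows "grad f x = D"
  unfolding grad_def using assms
  by (metis (mono_tags) gderiv_unique someI_ex)

lemma differentiable_gderiv:
  fixes f :: "'a::euclidean_space \<Rightarrow> real"
  assumes "f differentiable (at x)" shows "GDERIV f x :> grad f x"
proof -
  obtain f' where f': "(f has_derivative f') (at x)" using assms by (auto simp: differentiable_def)
  have lin: "linear f'" using f' has_derivative_linear by blast
  define D where "D = (\<Sum>b\<in>Basis. f' b *\<^sub>R b)"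
  have "f' h = h \<bullet> D" for h
  proof -
    have "f' h = f' (\<Sum>b\<in>Basis. (h \<bullet> b) *\<^sub>R b)" by (simp add: euclidean_representation)
    also have "\<dots> = (\<Sum>b\<in>Basis. (h \<bullet> b) * f' b)"
      using lin by (simp add: linear_sum linear_scale)
    also have "\<dots> = h \<bullet> D" unfolding D_def by (simp add: inner_sum_right mult.commute)
    finally show ?thesis .
  qed
  then have "f' = (\<lambda>h. h \<bullet> D)" by auto
  then have "GDERIV f x :> D" using f' by (simp add: gderiv_def)
  then show ?thesis using grad_eq by metis
qed

lemma cont_meas: "continuous_on UNIV (h :: 'a::euclidean_space \<Rightarrow> real) \<Longrightarrow> h \<in> borel_measurable lebesgue"
  by (simp add: borel_measurable_continuous_onI measurable_completion)

definition qc :: "nat \<Rightarrow> real \<Rightarrow> real" where "qc k t = (max 0 (1 - t)) ^ k"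
definition dqc :: "nat \<Rightarrow> real \<Rightarrow> real" where "dqc k t = - real k * (max 0 (1 - t)) ^ (k - 1)"

lemma qc_deriv:
  assumes k: "k \<ge> 2"
  shows "(qc k has_field_derivative dqc k t) (at t)"
proof -
  consider "t < 1" | "t > 1" | "t = 1" by linarith
  then show ?thesis
  proof cases
    case 1
    have "((\<lambda>t. (1 - t) ^ k) has_field_derivative dqc k t) (at t)"
      using 1 by (auto intro!: derivative_eq_intros simp: dqc_def)
    then show ?thesis
      by (rule has_field_derivative_transform_within_open[where S="{..<1}"]) (use 1 in \<open>auto simp: qc_def\<close>)
  next
    case 2
    have "((\<lambda>t. 0) has_field_derivative dqc k t) (at t)"
      using 2 k by (auto intro!: derivative_eq_intros simp: dqc_def)
    then show ?thesis
      by (rule has_field_derivative_transform_within_open[where S="{1<..}"]) (use 2 k in \<open>auto simp: qc_def\<close>)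
  next
    case 3
    have d0: "dqc k t = 0" using 3 k by (simp add: dqc_def)
    show ?thesis unfolding DERIV_def d0
    proof (rule Lim_null_comparison)
      show "\<forall>\<^sub>F h in at 0. norm ((qc k (t + h) - qc k t) / h) \<le> \<bar>h\<bar> ^ (k - 1)"
      proof (rule always_eventually, rule allI)
        fix h :: real
        have "norm ((qc k (t + h) - qc k t) / h) = (max 0 (- h)) ^ k / \<bar>h\<bar>"
          using 3 k by (simp add: qc_def abs_div)
        also have "\<dots> \<le> \<bar>h\<bar> ^ k / \<bar>h\<bar>"
          by (intro divide_right_mono power_mono) auto
        also have "\<dots> \<le> \<bar>h\<bar> ^ (k - 1)"
        proof (cases "h = 0")
          case False
          then show ?thesis using k
          proof -
            obtain j where j: "k = Suc j" using k by (cases k) auto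
            show ?thesis using False by (simp add: j)
          qed
        qed auto
        finally show "norm ((qc k (t + h) - qc k t) / h) \<le> \<bar>h\<bar> ^ (k - 1)" .
      qed
      show "((\<lambda>h. \<bar>h\<bar> ^ (k - 1)) \<longlongrightarrow> 0) (at (0::real))"
        using k by (auto intro!: tendsto_eq_intros)
    qed
  qed
qed

lemma continuous_dqc: "continuous_on UNIV (dqc k)"
  unfolding dqc_def by (intro continuous_intros)

definition zeta :: "nat \<Rightarrow> real \<Rightarrow> 'a::euclidean_space \<Rightarrow> real" where
  "zeta k \<rho> x = qc k ((x \<bullet> x) / \<rho>)"
definition Zg :: "nat \<Rightarrow> real \<Rightarrow> 'a::euclidean_space \<Rightarrow> 'a" where
  "Zg k \<rho> x = (dqc k ((x \<bullet> x) / \<rho>) * (2 / \<rho>)) *\<^sub>R x"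

lemma zeta_gderiv:
  assumes "k \<ge> 2" shows "GDERIV (zeta k \<rho>) x :> Zg k \<rho> x"
proof -
  have "((\<lambda>x. x \<bullet> x) has_derivative (\<lambda>h. h \<bullet> x + x \<bullet> h)) (at x)"
    by (auto intro!: derivative_eq_intros)
  then have "((\<lambda>x. (1/\<rho>) * (x \<bullet> x)) has_derivative (\<lambda>h. (1/\<rho>) * (h \<bullet> x + x \<bullet> h))) (at x)"
    by (rule has_derivative_mult_right)
  moreover have "(\<lambda>x. (1/\<rho>) * (x \<bullet> x)) = (\<lambda>x. (x \<bullet> x) / \<rho>)" by auto
  moreover have "(\<lambda>h. (1/\<rho>) * (h \<bullet> x + x \<bullet> h)) = (\<lambda>h. h \<bullet> ((2/\<rho>) *\<^sub>R x))"
    by (auto simp: inner_commute fun_eq_iff field_simps)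
  ultimately have "GDERIV (\<lambda>x. (x \<bullet> x) / \<rho>) x :> (2 / \<rho>) *\<^sub>R x"
    unfolding gderiv_def by simp
  from GDERIV_DERIV_compose[OF this qc_deriv[OF assms]]
  have "GDERIV (\<lambda>x. qc k ((x \<bullet> x) / \<rho>)) x :> Zg k \<rho> x" by (simp add: Zg_def)
  moreover have e: "zeta k \<rho> = (\<lambda>x. qc k ((x \<bullet> x) / \<rho>))" by (rule ext) (simp add: zeta_def)
  ultimately show ?thesis by (simp only: e)
qed

lemma C1_of_gderiv:
  fixes f :: "'a::euclidean_space \<Rightarrow> real"
  assumes "\<And>x. GDERIV f x :> D x" "continuous_on UNIV D"
  shows "C1_fun f"
proof -
  have "grad f = D" using assms(1) grad_eq by blast
  moreover have "f differentiable (at x)" for x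
    using assms(1)[of x] unfolding gderiv_def differentiable_def by blast
  ultimately show ?thesis using assms(2) by (simp add: C1_fun_def)
qed

lemma compact_support:
  fixes f :: "'a::euclidean_space \<Rightarrow> real"
  assumes "\<And>x. norm x \<ge> r \<Longrightarrow> f x = 0"
  shows "compact (closure {x. f x \<noteq> 0})"
proof -
  have "{x. f x \<noteq> 0} \<subseteq> cball 0 r" using assms by (force simp: not_le)
  then have "bounded (closure {x. f x \<noteq> 0})"
    by (meson bounded_cball bounded_closure bounded_subset)
  then show ?thesis by (simp add: compact_eq_bounded_closed)
qed

lemma zeta_zero:
  assumes "k \<ge> 2" "\<rho> > 0" "x \<bullet> x \<ge> \<rho>"
  shows "zeta k \<rho> x = 0" "Zg k \<rho> x = 0"
  using assms by (auto simp: zeta_def Zg_def qc_def dqc_def max_def)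

lemma zeta_C1c:
  assumes "k \<ge> 2" "R > 0"
  shows "C1c_fun (zeta k (4 * R\<^sup>2) :: 'a::euclidean_space \<Rightarrow> real)"
proof -
  have c: "continuous_on UNIV (Zg k (4*R\<^sup>2) :: 'a \<Rightarrow> 'a)"
    unfolding Zg_def
    using assms by (intro continuous_intros continuous_on_compose2[OF continuous_dqc]) auto
  have "norm x \<ge> 2 * R \<Longrightarrow> zeta k (4*R\<^sup>2) x = (0::real)" for x :: 'a
  proof -
    assume "norm x \<ge> 2 * R"
    then have "(2*R)^2 \<le> (norm x)^2" using assms by (intro power_mono) auto
    then have "x \<bullet> x \<ge> 4 * R\<^sup>2" by (simp add: power2_norm_eq_inner power_mult_distrib)
    moreover have "4*R\<^sup>2 > 0" using assms by simp
    ultimately show ?thesis using zeta_zero(1)[of k "4*R\<^sup>2" x] assms by simp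
  qed
  then show ?thesis unfolding C1c_fun_def
    using C1_of_gderiv[OF zeta_gderiv[OF assms(1)] c] compact_support by blast
qed

lemma uzeta_C1c:
  fixes u :: "'a::euclidean_space \<Rightarrow> real"
  assumes "k \<ge> 2" "R > 0" "C1_fun u"
  shows "C1c_fun (\<lambda>x. u x * zeta k (4 * R\<^sup>2) x)"
    and "grad (\<lambda>x. u x * zeta k (4 * R\<^sup>2) x) x = u x *\<^sub>R Zg k (4*R\<^sup>2) x + zeta k (4*R\<^sup>2) x *\<^sub>R grad u x"
proof -
  have du: "GDERIV u x :> grad u x" for x using assms(3) differentiable_gderiv by (auto simp: C1_fun_def)
  have g: "GDERIV (\<lambda>x. u x * zeta k (4 * R\<^sup>2) x) x :> u x *\<^sub>R Zg k (4*R\<^sup>2) x + zeta k (4*R\<^sup>2) x *\<^sub>R grad u x" for x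
    by (rule GDERIV_mult[OF du zeta_gderiv[OF assms(1)]])
  then show "grad (\<lambda>x. u x * zeta k (4 * R\<^sup>2) x) x = u x *\<^sub>R Zg k (4*R\<^sup>2) x + zeta k (4*R\<^sup>2) x *\<^sub>R grad u x"
    by (rule grad_eq)
  have cu: "continuous_on UNIV u"
    using assms(3) unfolding C1_fun_def by (meson continuous_at_imp_continuous_on differentiable_imp_continuous_within)
  have cz: "continuous_on UNIV (zeta k (4 * R\<^sup>2) :: 'a \<Rightarrow> real)"
    using zeta_gderiv[OF assms(1)] unfolding gderiv_def
    by (meson continuous_at_imp_continuous_on has_derivative_continuous)
  have cZ: "continuous_on UNIV (Zg k (4*R\<^sup>2) :: 'a \<Rightarrow> 'a)"
    unfolding Zg_def
    using assms by (intro continuous_intros continuous_on_compose2[OF continuous_dqc]) auto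
  have cg: "continuous_on UNIV (grad u)" using assms(3) by (simp add: C1_fun_def)
  have c: "continuous_on UNIV (\<lambda>x. u x *\<^sub>R Zg k (4*R\<^sup>2) x + zeta k (4*R\<^sup>2) x *\<^sub>R grad u x)"
    by (intro continuous_intros cu cz cZ cg)
  have "norm x \<ge> 2 * R \<Longrightarrow> u x * zeta k (4*R\<^sup>2) x = (0::real)" for x :: 'a
  proof -
    assume "norm x \<ge> 2 * R"
    then have "(2*R)^2 \<le> (norm x)^2" using assms by (intro power_mono) auto
    then have "x \<bullet> x \<ge> 4 * R\<^sup>2" by (simp add: power2_norm_eq_inner power_mult_distrib)
    moreover have "4*R\<^sup>2 > 0" using assms by simp
    ultimately show ?thesis using zeta_zero(1)[of k "4*R\<^sup>2" x] assms by simp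
  qed
  then have "compact (closure {x. u x * zeta k (4*R\<^sup>2) x \<noteq> 0})" by (rule compact_support)
  with C1_of_gderiv[OF g c] show "C1c_fun (\<lambda>x. u x * zeta k (4 * R\<^sup>2) x)" unfolding C1c_fun_def
    by (rule conjI)
qed


lemma emeasure_leb_compact: "compact (K::'a::euclidean_space set) \<Longrightarrow> emeasure lebesgue K < \<infinity>"
  using emeasure_compact_finite[of K] by (simp add: compact_imp_closed)

lemma L1_loc_one: "L1_loc (\<lambda>x::'a::euclidean_space. 1::real)"
  unfolding L1_loc_def set_integrable_def
proof (intro allI impI)
  fix K :: "'a set" assume "compact K"
  then have "integrable lebesgue (indicator K :: 'a \<Rightarrow> real)"
    using emeasure_leb_compact[OF \<open>compact K\<close>]
    by (intro integrable_real_indicator) (auto simp: compact_imp_closed)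
  then show "integrable lebesgue (\<lambda>x. indicator K x *\<^sub>R (1::real))" by simp
qed

lemma int_wh:
  fixes w h :: "'a::euclidean_space \<Rightarrow> real"
  assumes w: "L1_loc w" and h: "continuous_on UNIV h" and z: "\<And>x. norm x \<ge> r \<Longrightarrow> h x = 0"
  shows "integrable lebesgue (\<lambda>x. w x * h x)"
proof -
  define K where "K = cball (0::'a) r"
  have cK: "compact K" by (simp add: K_def)
  have iw: "integrable lebesgue (\<lambda>x. indicator K x *\<^sub>R w x)"
    using w cK unfolding L1_loc_def set_integrable_def by blast
  have "bounded (h ` K)"
    using cK h by (meson compact_continuous_image compact_imp_bounded continuous_on_subset subset_UNIV)
  then obtain B where B: "\<And>x. x \<in> K \<Longrightarrow> \<bar>h x\<bar> \<le> B" by (auto simp: bounded_iff)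
  have eq: "(\<lambda>x. w x * h x) = (\<lambda>x. (indicator K x *\<^sub>R w x) * h x)"
  proof
    fix x show "w x * h x = (indicator K x *\<^sub>R w x) * h x"
      using z[of x] by (cases "x \<in> K") (auto simp: K_def)
  qed
  have i1: "integrable lebesgue (\<lambda>x. B * (indicator K x *\<^sub>R w x))"
    using iw by simp
  have m1: "(\<lambda>x. indicator K x *\<^sub>R w x * h x) \<in> borel_measurable lebesgue"
    using borel_measurable_integrable[OF iw] cont_meas[OF h] by measurable
  have b1: "AE x in lebesgue. norm (indicator K x *\<^sub>R w x * h x) \<le> norm (B * (indicator K x *\<^sub>R w x))"
  proof (rule AE_I2)
    fix x show "norm (indicator K x *\<^sub>R w x * h x) \<le> norm (B * (indicator K x *\<^sub>R w x))"
    proof (cases "x \<in> K")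
      case True
      then have "\<bar>h x\<bar> \<le> B" by (rule B)
      then show ?thesis using True by (simp add: abs_mult mult.commute[of "\<bar>w x\<bar>"] mult_right_mono)
    qed simp
  qed
  show ?thesis unfolding eq using Bochner_Integration.integrable_bound[OF i1 m1 b1] .
qed

lemma int_h:
  fixes h :: "'a::euclidean_space \<Rightarrow> real"
  assumes h: "continuous_on UNIV h" and z: "\<And>x. norm x \<ge> r \<Longrightarrow> h x = 0"
  shows "integrable lebesgue h"
  using int_wh[OF L1_loc_one h z] by simp

lemma measure_leb_ball: "r \<ge> 0 \<Longrightarrow> measure lebesgue (ball (0::'a::euclidean_space) r) = unit_ball_vol (real DIM('a)) * r ^ DIM('a)"
  using content_ball[where c="0::'a" and r=r] by simp

lemma int_indicator_w:
  fixes w :: "'a::euclidean_space \<Rightarrow> real"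
  assumes w: "L1_loc w"
  shows "integrable lebesgue (\<lambda>x. w x * indicator (ball 0 r) x)"
proof -
  have "set_integrable lebesgue (cball 0 r) w" using w by (simp add: L1_loc_def)
  then have "set_integrable lebesgue (ball 0 r) w"
    by (rule set_integrable_subset) auto
  then show ?thesis by (simp add: set_integrable_def mult.commute)
qed

lemma young_crude:
  fixes X Y e p :: real
  assumes X: "X \<ge> 0" and Y: "Y \<ge> 0" and e: "e > 0" and p: "p \<ge> 2"
  shows "X powr (p - 1) * Y \<le> e * X powr p + e powr (1 - p) * Y powr p"
proof (cases "Y \<le> e * X")
  case True
  have "X powr (p - 1) * Y \<le> X powr (p - 1) * (e * X)"
    using True by (intro mult_left_mono) auto
  also have "\<dots> = e * X powr p"
  proof (cases "X = 0")
    case False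
    then have "X powr (p - 1) * X = X powr p" using X by (simp add: powr_diff)
    then show ?thesis by (simp add: algebra_simps)
  qed (use p in auto)
  also have "\<dots> \<le> e * X powr p + e powr (1 - p) * Y powr p" by simp
  finally show ?thesis .
next
  case False
  have "e * X \<ge> 0" using X e by simp
  then have Ypos: "Y > 0" using False by linarith
  have "X \<le> Y / e" using False e by (simp add: field_simps)
  then have "X powr (p - 1) \<le> (Y / e) powr (p - 1)" using X p by (intro powr_mono2) auto
  also have "\<dots> = Y powr (p - 1) * e powr (1 - p)"
  proof -
    have "e powr (1 - p) = inverse (e powr (p - 1))" using powr_minus[of e "p - 1"] by simp
    moreover have "(Y / e) powr (p - 1) = Y powr (p - 1) / e powr (p - 1)" by (rule powr_divide)
    ultimately show ?thesis by (simp add: divide_inverse)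
  qed
  finally have "X powr (p - 1) * Y \<le> Y powr (p - 1) * e powr (1 - p) * Y"
    using Ypos by (intro mult_right_mono) auto
  also have "\<dots> = e powr (1 - p) * Y powr p"
    using Ypos by (simp add: powr_diff algebra_simps)
  moreover have "0 \<le> e * X powr p" using e by simp
  ultimately show ?thesis by linarith
qed

lemma rpow_sq:
  assumes "a \<ge> 0" "p \<ge> 2"
  shows "rpow a (p - 2) * a\<^sup>2 = a powr p" "rpow a (p - 2) * a = a powr (p - 1)" "rpow a (p - 2) \<ge> 0"
proof -
  show "rpow a (p - 2) \<ge> 0" by (simp add: rpow_def)
  show "rpow a (p - 2) * a\<^sup>2 = a powr p"
  proof (cases "a = 0")
    case True then show ?thesis using assms by (simp add: rpow_def)
  next
    case False
    then have a0: "a > 0" using assms by simp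
    have "rpow a (p - 2) = a powr (p - 2)" using a0 by (simp add: rpow_def)
    moreover have "a\<^sup>2 = a powr 2" using a0 by simp
    moreover have "a powr (p - 2) * a powr 2 = a powr p" by (simp add: powr_add[symmetric])
    ultimately show ?thesis by simp
  qed
  show "rpow a (p - 2) * a = a powr (p - 1)"
  proof (cases "a = 0")
    case True then show ?thesis using assms by (simp add: rpow_def)
  next
    case False
    then have a0: "a > 0" using assms by simp
    have "rpow a (p - 2) = a powr (p - 2)" using a0 by (simp add: rpow_def)
    moreover have "a powr (p - 1) = a powr ((p - 2) + 1)" by simp
    moreover have "a powr ((p - 2) + 1) = a powr (p - 2) * a powr 1" by (rule powr_add)
    moreover have "a powr 1 = a" using a0 by simp
    ultimately show ?thesis by simp
  qed
qed

lemma key_pt: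
  fixes w a s z p M R :: real and k :: nat
  assumes w: "w \<ge> 0" and a: "a \<ge> 0" and s: "0 < s" "s \<le> 1" and kp: "real k \<ge> p" and p: "p \<ge> 2"
    and z: "0 \<le> z" "z \<le> (real k / R) * s ^ (k - 1)" and R: "R > 0" and M: "M > 0"
  shows "w * (a powr (p - 1) * z) \<le> (1 / (2 * M)) * (w * a powr p * s ^ k)
            + (2 * M) powr (p - 1) * (real k / R) powr p * w"
proof -
  have k1: "k \<ge> 1" using kp p by linarith
  define X where "X = a * s powr (real k / p)"
  have X0: "X \<ge> 0" using a by (simp add: X_def)
  have "s ^ (k - 1) = s powr (real k - 1)" using s k1 by (simp add: powr_realpow[symmetric] of_nat_diff)
  also have "\<dots> \<le> s powr (real k / p * (p - 1))"
    using s kp p by (intro powr_mono') (auto simp: field_simps)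
  also have "\<dots> = (s powr (real k / p)) powr (p - 1)" by (simp add: powr_powr)
  finally have sk: "s ^ (k - 1) \<le> (s powr (real k / p)) powr (p - 1)" .
  have "(real k / R) * s ^ (k - 1) \<le> (real k / R) * (s powr (real k / p)) powr (p - 1)"
    using sk R by (intro mult_left_mono) auto
  then have "z \<le> (real k / R) * (s powr (real k / p)) powr (p - 1)" using z(2) by linarith
  then have "a powr (p - 1) * z \<le> a powr (p - 1) * ((real k / R) * (s powr (real k / p)) powr (p - 1))"
    by (intro mult_left_mono) auto
  also have "\<dots> = X powr (p - 1) * (real k / R)"
    using a s by (simp add: X_def powr_mult)
  also have "\<dots> \<le> (1 / (2 * M)) * X powr p + (1 / (2 * M)) powr (1 - p) * (real k / R) powr p"
    using X0 R M p by (intro young_crude) auto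
  also have "X powr p = a powr p * s ^ k"
    using a s p by (simp add: X_def powr_mult powr_powr powr_realpow)
  also have "(1 / (2 * M)) powr (1 - p) = (2 * M) powr (p - 1)"
  proof -
    have "(2*M) powr (p - 1) = inverse ((2*M) powr (1 - p))" using powr_minus[of "2*M" "1 - p"] by simp
    moreover have "(1 / (2 * M)) powr (1 - p) = 1 powr (1 - p) / (2*M) powr (1 - p)" by (rule powr_divide)
    moreover have "1 powr (1 - p) = (1::real)" by (rule powr_one_eq_one)
    ultimately show ?thesis by (simp only: inverse_eq_divide)
  qed
  finally have "a powr (p - 1) * z \<le> 1 / (2 * M) * (a powr p * s ^ k) + (2 * M) powr (p - 1) * (real k / R) powr p" .
  from mult_left_mono[OF this w] show ?thesis by (simp add: algebra_simps)
qed

lemma final_contra: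
  fixes c0 A1 A2 T \<mu> p :: real
  assumes c0: "c0 > 0" and A: "A1 \<ge> 0" "A2 \<ge> 0" and T: "T > 1" and mu: "\<mu> < p * T"
    and H: "\<And>R l. R \<ge> 1 \<Longrightarrow> l > 0 \<Longrightarrow> c0 \<le> A1 * l * R powr (- p) + A2 * l powr (1 - T) * R powr (\<mu> - p)"
  shows False
proof -
  define q0 where "q0 = (\<mu> - p) / (T - 1)"
  define \<beta> where "\<beta> = (p + q0) / 2"
  have q: "q0 < p" using mu T by (simp add: field_simps q0_def)
  have e1: "\<beta> - p < 0" using q by (simp add: \<beta>_def)
  have "\<mu> - p < \<beta> * (T - 1)"
  proof -
    have "q0 < \<beta>" using q unfolding \<beta>_def by (simp add: field_simps)
    then show ?thesis using T by (simp add: field_simps q0_def)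
  qed
  then have e2: "\<beta> * (1 - T) + (\<mu> - p) < 0" by (simp add: algebra_simps)
  have lim: "((\<lambda>R. A1 * R powr (\<beta> - p) + A2 * R powr (\<beta> * (1 - T) + (\<mu> - p))) \<longlongrightarrow> 0) at_top"
    using e1 e2
    by (intro tendsto_add_zero tendsto_mult_right_zero tendsto_neg_powr filterlim_ident) auto
  have "eventually (\<lambda>R. A1 * R powr (\<beta> - p) + A2 * R powr (\<beta> * (1 - T) + (\<mu> - p)) < c0) at_top"
    using order_tendstoD(2)[OF lim c0] .
  moreover have "eventually (\<lambda>R::real. R \<ge> 1) at_top" by simp
  ultimately obtain R :: real where R: "R \<ge> 1" "A1 * R powr (\<beta> - p) + A2 * R powr (\<beta> * (1 - T) + (\<mu> - p)) < c0"
    by (metis (mono_tags, lifting) eventually_at_top_linorder eventually_conj_iff order.refl)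
  have Rp: "R > 0" using R by simp
  have "c0 \<le> A1 * R powr \<beta> * R powr (- p) + A2 * (R powr \<beta>) powr (1 - T) * R powr (\<mu> - p)"
    using H[OF R(1)] Rp by simp
  also have "A1 * R powr \<beta> * R powr (- p) = A1 * R powr (\<beta> - p)"
    by (simp add: powr_add[symmetric])
  also have "A2 * (R powr \<beta>) powr (1 - T) * R powr (\<mu> - p) = A2 * R powr (\<beta> * (1 - T) + (\<mu> - p))"
    by (simp add: powr_powr powr_add)
  finally show False using R(2) by linarith
qed


lemma cut_facts:
  fixes x :: "'a::euclidean_space"
  assumes k: "k \<ge> 2" and R: "R > 0"
  shows "zeta k (4*R\<^sup>2) x \<ge> 0"
    and "norm x \<ge> 2*R \<Longrightarrow> zeta k (4*R\<^sup>2) x = 0 \<and> Zg k (4*R\<^sup>2) x = 0"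
    and "norm x < 2*R \<Longrightarrow> 0 < 1 - (x \<bullet> x)/(4*R\<^sup>2) \<and> 1 - (x \<bullet> x)/(4*R\<^sup>2) \<le> 1
           \<and> zeta k (4*R\<^sup>2) x = (1 - (x \<bullet> x)/(4*R\<^sup>2)) ^ k
           \<and> norm (Zg k (4*R\<^sup>2) x) \<le> (real k / R) * (1 - (x \<bullet> x)/(4*R\<^sup>2)) ^ (k - 1)"
    and "norm x < R \<Longrightarrow> zeta k (4*R\<^sup>2) x \<ge> (3/4) ^ k"
proof -
  have xx: "x \<bullet> x = (norm x)\<^sup>2" by (simp add: power2_norm_eq_inner)
  have rho: "4*R\<^sup>2 > 0" using R by simp
  show "zeta k (4*R\<^sup>2) x \<ge> 0" by (simp add: zeta_def qc_def)
  show "norm x \<ge> 2*R \<Longrightarrow> zeta k (4*R\<^sup>2) x = 0 \<and> Zg k (4*R\<^sup>2) x = 0"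
  proof -
    assume "norm x \<ge> 2*R"
    then have "(2*R)^2 \<le> (norm x)^2" using R by (intro power_mono) auto
    then have "x \<bullet> x \<ge> 4 * R\<^sup>2" by (simp add: xx power_mult_distrib)
    then show ?thesis using zeta_zero[OF k rho] by blast
  qed
  show "norm x < 2*R \<Longrightarrow> 0 < 1 - (x \<bullet> x)/(4*R\<^sup>2) \<and> 1 - (x \<bullet> x)/(4*R\<^sup>2) \<le> 1
           \<and> zeta k (4*R\<^sup>2) x = (1 - (x \<bullet> x)/(4*R\<^sup>2)) ^ k
           \<and> norm (Zg k (4*R\<^sup>2) x) \<le> (real k / R) * (1 - (x \<bullet> x)/(4*R\<^sup>2)) ^ (k - 1)"
  proof -
    assume nx: "norm x < 2*R"
    define s where "s = 1 - (x \<bullet> x)/(4*R\<^sup>2)"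
    have "(norm x)^2 < (2*R)^2" using nx by (intro power_strict_mono) auto
    then have "x \<bullet> x < 4 * R\<^sup>2" by (simp add: xx power_mult_distrib)
    then have s0: "s > 0" using rho by (simp add: s_def field_simps)
    have s1: "s \<le> 1" using rho by (simp add: s_def)
    have mx: "max 0 (1 - (x \<bullet> x)/(4*R\<^sup>2)) = s" using s0 by (simp add: s_def)
    have z: "zeta k (4*R\<^sup>2) x = s ^ k" by (simp add: zeta_def qc_def mx)
    have "norm (Zg k (4*R\<^sup>2) x) = real k * s ^ (k - 1) * (2 / (4*R\<^sup>2)) * norm x"
      using s0 rho by (simp add: Zg_def dqc_def mx abs_mult)
    also have "\<dots> \<le> real k * s ^ (k - 1) * (2 / (4*R\<^sup>2)) * (2*R)"
      using nx s0 rho by (intro mult_left_mono) auto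
    also have "\<dots> = (real k / R) * s ^ (k - 1)"
      using R by (simp add: field_simps power2_eq_square)
    finally show ?thesis using s0 s1 z by (simp add: s_def)
  qed
  show "norm x < R \<Longrightarrow> zeta k (4*R\<^sup>2) x \<ge> (3/4) ^ k"
  proof -
    assume nx: "norm x < R"
    have "(norm x)^2 \<le> R^2" using nx by (intro power_mono) auto
    then have "(x \<bullet> x)/(4*R\<^sup>2) \<le> 1/4" using rho by (simp add: xx field_simps)
    then have "max 0 (1 - (x \<bullet> x)/(4*R\<^sup>2)) \<ge> 3/4" by simp
    then show ?thesis unfolding zeta_def qc_def by (rule power_mono) simp
  qed
qed



lemma cont_rp:
  fixes u :: "'a::euclidean_space \<Rightarrow> real"
  assumes "C1_fun u" "p \<ge> 2"
  shows "continuous_on UNIV (\<lambda>x. rpow (norm (grad u x)) (p - 2))"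
proof (cases "p = 2")
  case True then show ?thesis by (simp add: rpow_def)
next
  case False
  then have eq: "(\<lambda>x. rpow (norm (grad u x)) (p - 2)) = (\<lambda>x. (norm (grad u x)) powr (p - 2))"
    by (simp add: rpow_def)
  have "continuous_on UNIV (\<lambda>x. (norm (grad u x)) powr (p - 2))"
    using assms False by (intro continuous_on_powr' continuous_intros) (auto simp: C1_fun_def)
  then show ?thesis unfolding eq .
qed

lemma per_R:
  fixes w g u :: "'a::euclidean_space \<Rightarrow> real"
  assumes p: "p \<ge> 2" and Mpos: "M > 0" and k: "k \<ge> 2" "real k \<ge> p"
    and Lw: "L1_loc w" and wpos: "AE x in lebesgue. w x > 0"
    and Lg: "L1_loc g" and gB: "AE x in lebesgue. g x \<ge> 1/B" and B: "B > 0"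
    and uC1: "C1_fun u" and upos: "\<And>x. u x > 0" and uM: "\<And>x. u x \<le> M"
    and weak: "weak_solution p w g u"
    and R: "R > 0"
  shows "(3/4)^k * measure lebesgue (ball (0::'a) R)
     \<le> B * (2 * ((2*M) powr (p-1) * (real k / R) powr p)) * (\<integral>x. w x * indicator (ball 0 (2*R)) x \<partial>lebesgue)"
proof -
  define \<zeta> :: "'a \<Rightarrow> real" where "\<zeta> = zeta k (4*R\<^sup>2)"
  define Z :: "'a \<Rightarrow> 'a" where "Z = Zg k (4*R\<^sup>2)"
  define rp where "rp = (\<lambda>x. rpow (norm (grad u x)) (p - 2))"
  define Kc where "Kc = (2*M) powr (p-1) * (real k / R) powr p"
  have Kc0: "Kc \<ge> 0" by (simp add: Kc_def)
  have gz: "grad \<zeta> = Z" unfolding \<zeta>_def Z_def using grad_eq[OF zeta_gderiv[OF k(1)]] by blast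
  have C1z: "C1c_fun \<zeta>" unfolding \<zeta>_def using zeta_C1c[OF k(1) R] .
  have C1uz: "C1c_fun (\<lambda>x. u x * \<zeta> x)" unfolding \<zeta>_def using uzeta_C1c(1)[OF k(1) R uC1] .
  have guz: "grad (\<lambda>x. u x * \<zeta> x) x = u x *\<^sub>R Z x + \<zeta> x *\<^sub>R grad u x" for x
    unfolding \<zeta>_def Z_def using uzeta_C1c(2)[OF k(1) R uC1] .
  have cu: "continuous_on UNIV u"
    using uC1 unfolding C1_fun_def by (meson continuous_at_imp_continuous_on differentiable_imp_continuous_within)
  have cgu: "continuous_on UNIV (grad u)" using uC1 by (simp add: C1_fun_def)
  have crp: "continuous_on UNIV rp" unfolding rp_def using cont_rp[OF uC1 p] .
  have cz: "continuous_on UNIV \<zeta>"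
    using zeta_gderiv[OF k(1)] unfolding gderiv_def \<zeta>_def
    by (meson continuous_at_imp_continuous_on has_derivative_continuous)
  have cZ: "continuous_on UNIV Z"
    unfolding Z_def Zg_def using R
    by (intro continuous_intros continuous_on_compose2[OF continuous_dqc]) auto
  have cf: "continuous_on UNIV (\<lambda>x. fnl (u x))"
    unfolding fnl_def using upos by (intro continuous_intros cu) (auto simp: less_imp_neq[symmetric])
  have zo: "\<zeta> x = 0" "Z x = 0" if "norm x \<ge> 2*R" for x
    using cut_facts(2)[OF k(1) R that] by (auto simp: \<zeta>_def Z_def)

  define F1 where "F1 = (\<lambda>x. w x * (rp x * (grad u x \<bullet> Z x)))"
  define F2 where "F2 = (\<lambda>x. w x * (rp x * (grad u x \<bullet> (u x *\<^sub>R Z x + \<zeta> x *\<^sub>R grad u x))))"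
  define e where "e = (\<lambda>x. w x * (norm (grad u x) powr p * \<zeta> x))"
  define G1 where "G1 = (\<lambda>x. g x * (fnl (u x) * \<zeta> x))"
  define G2 where "G2 = (\<lambda>x. g x * (fnl (u x) * (u x * \<zeta> x)))"
  define Ind where "Ind = (\<lambda>x. w x * indicator (ball (0::'a) (2*R)) x)"

  have iF1: "integrable lebesgue F1" unfolding F1_def
    by (rule int_wh[OF Lw, where r="2*R"]) (auto intro!: continuous_intros crp cgu cZ simp: zo)
  have iF2: "integrable lebesgue F2" unfolding F2_def
    by (rule int_wh[OF Lw, where r="2*R"]) (auto intro!: continuous_intros crp cgu cZ cz cu simp: zo)
  have ie: "integrable lebesgue e" unfolding e_def
    by (rule int_wh[OF Lw, where r="2*R"])
       (use p in \<open>auto intro!: continuous_intros continuous_on_powr' cgu cz simp: zo\<close>)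
  have iG1: "integrable lebesgue G1" unfolding G1_def
    by (rule int_wh[OF Lg, where r="2*R"]) (auto intro!: continuous_intros cf cz simp: zo)
  have iG2: "integrable lebesgue G2" unfolding G2_def
    by (rule int_wh[OF Lg, where r="2*R"]) (auto intro!: continuous_intros cf cz cu simp: zo)
  have iz: "integrable lebesgue \<zeta>"
    by (rule int_h[OF cz, where r="2*R"]) (simp add: zo)
  have iInd: "integrable lebesgue Ind" unfolding Ind_def by (rule int_indicator_w[OF Lw])
  have iaF1: "integrable lebesgue (\<lambda>x. \<bar>F1 x\<bar>)" using iF1 by (rule integrable_abs)

  have "(\<integral>x. w x * rpow (norm (grad u x)) (p - 2) * (grad u x \<bullet> grad \<zeta> x) \<partial>lebesgue)
      = (\<integral>x. g x * fnl (u x) * \<zeta> x \<partial>lebesgue)"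
    using weak C1z unfolding weak_solution_def by blast
  then have w1: "integral\<^sup>L lebesgue F1 = integral\<^sup>L lebesgue G1"
    unfolding F1_def G1_def rp_def gz by (simp add: mult.assoc)
  have "(\<integral>x. w x * rpow (norm (grad u x)) (p - 2) * (grad u x \<bullet> grad (\<lambda>x. u x * \<zeta> x) x) \<partial>lebesgue)
      = (\<integral>x. g x * fnl (u x) * (u x * \<zeta> x) \<partial>lebesgue)"
    using weak C1uz unfolding weak_solution_def by blast
  then have w2: "integral\<^sup>L lebesgue F2 = integral\<^sup>L lebesgue G2"
    unfolding F2_def G2_def rp_def guz by (simp add: mult.assoc)
  have wAE: "AE x in lebesgue. w x \<ge> 0" using wpos by eventually_elim simp
  have F2eq: "F2 x = e x + u x * F1 x" for x
  proof -
    have a0: "norm (grad u x) \<ge> 0" by simp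
    have i1: "grad u x \<bullet> (u x *\<^sub>R Z x + \<zeta> x *\<^sub>R grad u x) = u x * (grad u x \<bullet> Z x) + \<zeta> x * (grad u x \<bullet> grad u x)"
      by (simp add: inner_add_right)
    have i2: "rp x * (grad u x \<bullet> grad u x) = norm (grad u x) powr p"
      unfolding rp_def power2_norm_eq_inner[symmetric] using rpow_sq(1)[OF a0 p] .
    have "rp x * (grad u x \<bullet> (u x *\<^sub>R Z x + \<zeta> x *\<^sub>R grad u x))
        = u x * (rp x * (grad u x \<bullet> Z x)) + \<zeta> x * (rp x * (grad u x \<bullet> grad u x))"
      unfolding i1 by (simp add: algebra_simps)
    also have "\<dots> = u x * (rp x * (grad u x \<bullet> Z x)) + \<zeta> x * norm (grad u x) powr p"
      unfolding i2 ..
    finally have "rp x * (grad u x \<bullet> (u x *\<^sub>R Z x + \<zeta> x *\<^sub>R grad u x))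
        = u x * (rp x * (grad u x \<bullet> Z x)) + \<zeta> x * norm (grad u x) powr p" .
    then have "F2 x = w x * (u x * (rp x * (grad u x \<bullet> Z x)) + \<zeta> x * norm (grad u x) powr p)"
      unfolding F2_def by (simp only:)
    also have "\<dots> = e x + u x * F1 x" unfolding e_def F1_def by (simp add: distrib_left ac_simps)
    finally show ?thesis .
  qed
  have P1: "e x \<le> F2 x + M * \<bar>F1 x\<bar>" for x
  proof -
    have "- (u x * F1 x) \<le> u x * \<bar>F1 x\<bar>" using upos[of x]
      by (metis abs_ge_minus_self abs_mult abs_of_pos minus_mult_right)
    also have "\<dots> \<le> M * \<bar>F1 x\<bar>" using uM[of x] by (intro mult_right_mono) auto
    finally show ?thesis using F2eq[of x] by linarith
  qed
  have P2: "AE x in lebesgue. \<bar>F1 x\<bar> \<le> (1/(2*M)) * e x + Kc * Ind x"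
    using wpos
  proof eventually_elim
    case (elim x)
    have e0: "e x \<ge> 0" using elim cut_facts(1)[OF k(1) R, of x] by (simp add: e_def \<zeta>_def)
    have I0: "Ind x \<ge> 0" using elim by (simp add: Ind_def)
    show ?case
    proof (cases "norm x < 2*R")
      case False
      then have "Z x = 0" using zo by simp
      then have "F1 x = 0" by (simp add: F1_def)
      then show ?thesis using e0 I0 Mpos Kc0 by simp
    next
      case True
      define s where "s = 1 - (x \<bullet> x)/(4*R\<^sup>2)"
      have cf3: "0 < s" "s \<le> 1" "\<zeta> x = s ^ k" "norm (Z x) \<le> (real k / R) * s ^ (k - 1)"
        using cut_facts(3)[OF k(1) R True] by (auto simp: s_def \<zeta>_def Z_def)
      have a0: "norm (grad u x) \<ge> 0" by simp
      have "\<bar>F1 x\<bar> = w x * (rp x * \<bar>grad u x \<bullet> Z x\<bar>)"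
        using elim by (simp add: F1_def abs_mult rp_def rpow_sq(3)[OF a0 p])
      also have "\<dots> \<le> w x * (rp x * (norm (grad u x) * norm (Z x)))"
        using elim rpow_sq(3)[OF a0 p] Cauchy_Schwarz_ineq2[of "grad u x" "Z x"]
        by (intro mult_left_mono) (auto simp: rp_def)
      also have "\<dots> = w x * (norm (grad u x) powr (p - 1) * norm (Z x))"
        using rpow_sq(2)[OF a0 p] by (simp add: rp_def mult.assoc[symmetric])
      also have "\<dots> \<le> (1 / (2 * M)) * (w x * norm (grad u x) powr p * s ^ k)
            + (2 * M) powr (p - 1) * (real k / R) powr p * w x"
        using elim cf3 k p R Mpos by (intro key_pt) auto
      also have "\<dots> = (1/(2*M)) * e x + Kc * Ind x"
        using True cf3(3) by (simp add: e_def Ind_def Kc_def mult.assoc)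
      finally show ?thesis .
    qed
  qed
  have Bi: "1/B > 0" using B by simp
  have gpos: "AE x in lebesgue. g x > 0" using gB
  proof eventually_elim
    case (elim x) then show ?case using Bi by linarith
  qed
  have P3: "AE x in lebesgue. G2 x \<le> 0" using gpos
  proof eventually_elim
    case (elim x)
    have "fnl (u x) < 0" by (simp add: fnl_def)
    moreover have "u x * \<zeta> x \<ge> 0" using upos[of x] cut_facts(1)[OF k(1) R, of x] by (simp add: \<zeta>_def)
    ultimately have "fnl (u x) * (u x * \<zeta> x) \<le> 0" by (simp add: mult_nonpos_nonneg)
    then show ?case using elim by (simp add: G2_def mult_nonneg_nonpos)
  qed
  have P4: "AE x in lebesgue. G1 x \<le> - (1/B) * \<zeta> x" using gB
  proof eventually_elim
    case (elim x)
    have z0: "\<zeta> x \<ge> 0" using cut_facts(1)[OF k(1) R, of x] by (simp add: \<zeta>_def)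
    have "exp (1 / u x) \<ge> 1" using upos[of x] by simp
    then have "fnl (u x) \<le> -1" by (simp add: fnl_def)
    moreover have "g x > 0" using elim Bi by linarith
    ultimately have "g x * fnl (u x) \<le> - g x"
      by (metis mult.right_neutral mult_left_mono less_imp_le mult_minus_right)
    also have "\<dots> \<le> - (1/B)" using elim by simp
    finally have "g x * fnl (u x) * \<zeta> x \<le> - (1/B) * \<zeta> x" using z0 by (intro mult_right_mono) auto
    then show ?case by (simp add: G1_def mult.assoc)
  qed
  have P5: "(3/4)^k * indicator (ball 0 R) x \<le> \<zeta> x" for x
    using cut_facts(1,4)[OF k(1) R, of x] by (auto simp: \<zeta>_def indicator_def)

  define J where "J = (\<integral>x. \<bar>F1 x\<bar> \<partial>lebesgue)"
  define E where "E = integral\<^sup>L lebesgue e"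
  define W where "W = integral\<^sup>L lebesgue Ind"
  have "E \<le> (\<integral>x. F2 x + M * \<bar>F1 x\<bar> \<partial>lebesgue)"
    unfolding E_def using ie iF2 iaF1 P1 by (intro integral_mono) auto
  also have "\<dots> = integral\<^sup>L lebesgue F2 + M * J"
    unfolding J_def using iF2 iaF1 by simp
  also have "integral\<^sup>L lebesgue F2 \<le> 0"
    unfolding w2 using P3 integral_nonneg_AE[of "\<lambda>x. - G2 x" lebesgue] by simp
  finally have EJ: "E \<le> M * J" by simp
  have "J \<le> (\<integral>x. (1/(2*M)) * e x + Kc * Ind x \<partial>lebesgue)"
    unfolding J_def using ie iaF1 iInd P2 by (intro integral_mono_AE) auto
  also have "\<dots> = (1/(2*M)) * E + Kc * W"
    unfolding E_def W_def using ie iInd by simp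
  finally have "J \<le> (1/(2*M)) * E + Kc * W" .
  also have "(1/(2*M)) * E \<le> (1/(2*M)) * (M * J)" using EJ Mpos by (intro mult_left_mono) auto
  finally have JW: "J \<le> 2 * Kc * W" using Mpos by (simp add: field_simps)
  have iball: "integrable lebesgue (indicator (ball (0::'a) R) :: 'a \<Rightarrow> real)"
    using int_indicator_w[OF L1_loc_one, of R] by simp
  have "(3/4)^k * measure lebesgue (ball (0::'a) R) = (\<integral>x. (3/4)^k * indicator (ball (0::'a) R) x \<partial>lebesgue)"
    by simp
  also have "\<dots> \<le> integral\<^sup>L lebesgue \<zeta>"
    using iball iz P5 by (intro integral_mono) auto
  also have "\<dots> \<le> - B * integral\<^sup>L lebesgue G1"
  proof -
    have "integral\<^sup>L lebesgue G1 \<le> (\<integral>x. - (1/B) * \<zeta> x \<partial>lebesgue)"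
      using iG1 iz P4 by (intro integral_mono_AE) auto
    also have "\<dots> = - (1/B) * integral\<^sup>L lebesgue \<zeta>" by simp
    finally show ?thesis using B by (simp add: field_simps)
  qed
  also have "\<dots> = B * (- integral\<^sup>L lebesgue F1)" by (simp add: w1)
  also have "\<dots> \<le> B * J"
  proof -
    have "\<bar>integral\<^sup>L lebesgue F1\<bar> \<le> J" using integral_abs_bound[of lebesgue F1] unfolding J_def by simp
    then have "- integral\<^sup>L lebesgue F1 \<le> J" by linarith
    then show ?thesis using B by (intro mult_left_mono) auto
  qed
  also have "\<dots> \<le> B * (2 * Kc * W)" using JW B by (intro mult_left_mono) auto
  finally show ?thesis unfolding Kc_def W_def Ind_def by (simp add: mult.assoc)
qed



lemma pt_w:
  fixes w l T :: real
  assumes w: "w > 0" and l: "l > 0" and T: "T > 1"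
  shows "w \<le> l + l powr (1 - T) * w powr T"
proof (cases "w \<le> l")
  case True
  have "0 \<le> l powr (1 - T) * w powr T" by simp
  then show ?thesis using True by linarith
next
  case False
  have "l powr (T - 1) \<le> w powr (T - 1)" using False l T by (intro powr_mono2) auto
  then have "w * l powr (T - 1) \<le> w * w powr (T - 1)" using w by (intro mult_left_mono) auto
  also have "w * w powr (T - 1) = w powr T" using w by (simp add: powr_diff)
  finally have "l powr (1 - T) * (w * l powr (T - 1)) \<le> l powr (1 - T) * w powr T"
    by (intro mult_left_mono) auto
  moreover have "l powr (1 - T) * (w * l powr (T - 1)) = w"
    using l by (simp add: powr_add[symmetric])
  ultimately show ?thesis using l by simp
qed

lemma W_bound:
  fixes w :: "'a::euclidean_space \<Rightarrow> real"
  assumes Lw: "L1_loc w" and wpos: "AE x in lebesgue. w x > 0" and T: "T > 1" and l: "l > 0"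
    and hg: "set_nn_integral lebesgue (ball 0 r) (\<lambda>x. ennreal (w x powr T)) \<le> ennreal Cr" and Cr: "Cr \<ge> 0"
  shows "(\<integral>x. w x * indicator (ball (0::'a) r) x \<partial>lebesgue) \<le> l * measure lebesgue (ball (0::'a) r) + l powr (1 - T) * Cr"
proof -
  define WT where "WT = (\<lambda>x. w x powr T * indicator (ball (0::'a) r) x)"
  have iI: "integrable lebesgue (\<lambda>x. w x * indicator (ball (0::'a) r) x)" by (rule int_indicator_w[OF Lw])
  have mI: "(\<lambda>x. w x * indicator (ball (0::'a) r) x) \<in> borel_measurable lebesgue"
    using borel_measurable_integrable[OF iI] .
  have WTeq: "WT = (\<lambda>x. (w x * indicator (ball (0::'a) r) x) powr T)"
    by (rule ext) (simp add: WT_def indicator_def)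
  have mWT: "WT \<in> borel_measurable lebesgue" unfolding WTeq using mI by measurable
  have WT0: "WT x \<ge> 0" for x by (simp add: WT_def)
  have nn: "(\<integral>\<^sup>+x. ennreal (WT x) \<partial>lebesgue) = set_nn_integral lebesgue (ball 0 r) (\<lambda>x. ennreal (w x powr T))"
    unfolding WT_def by (intro nn_integral_cong) (auto simp: indicator_def)
  have fin: "(\<integral>\<^sup>+x. ennreal (norm (WT x)) \<partial>lebesgue) < \<infinity>"
    using nn hg WT0 by (simp add: ennreal_less_top le_less_trans)
  have iWT: "integrable lebesgue WT" using mWT fin by (rule integrableI_bounded)
  have "ennreal (integral\<^sup>L lebesgue WT) = (\<integral>\<^sup>+x. ennreal (WT x) \<partial>lebesgue)"
    using nn_integral_eq_integral[OF iWT] WT0 by simp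
  then have "ennreal (integral\<^sup>L lebesgue WT) \<le> ennreal Cr" using nn hg by simp
  then have intWT: "integral\<^sup>L lebesgue WT \<le> Cr" using Cr by (simp add: ennreal_le_iff)
  have iball: "integrable lebesgue (indicator (ball (0::'a) r) :: 'a \<Rightarrow> real)"
    using int_indicator_w[OF L1_loc_one, of r] by simp
  have "(\<integral>x. w x * indicator (ball (0::'a) r) x \<partial>lebesgue)
      \<le> (\<integral>x. l * indicator (ball (0::'a) r) x + l powr (1 - T) * WT x \<partial>lebesgue)"
    using iI iball iWT wpos
  proof (intro integral_mono_AE)
    show "AE x in lebesgue. w x * indicator (ball 0 r) x \<le> l * indicator (ball 0 r) x + l powr (1 - T) * WT x"
      using wpos
    proof eventually_elim
      case (elim x) then show ?case using pt_w[OF elim l T] by (auto simp: WT_def indicator_def)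
    qed
  qed auto
  also have "\<dots> = l * measure lebesgue (ball (0::'a) r) + l powr (1 - T) * integral\<^sup>L lebesgue WT"
    using iball iWT by simp
  also have "\<dots> \<le> l * measure lebesgue (ball (0::'a) r) + l powr (1 - T) * Cr"
    using intWT by (intro add_left_mono mult_left_mono) auto
  finally show ?thesis .
qed



theorem theorem3p6:
  fixes w g :: "'a::euclidean_space \<Rightarrow> real"
    and p M \<mu> C :: real
  assumes hp: "p \<ge> 2"
    and hw: "L1_loc w" "AE x in lebesgue. w x > 0"
    and hg: "L1_loc g" "AE x in lebesgue. g x > 0" "Linf (\<lambda>x. 1 / g x)"
    and hM2: "p = 2 \<Longrightarrow> M > 0"
    and hM: "p > 2 \<Longrightarrow> 0 < M \<and> M < 4 / (p - 1)\<^sup>2"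
    and h\<mu>: "\<mu> > 0" "\<mu> < p * T_p M p"
    and hC: "C > 0"
    and hgrowth: "\<And>R. R \<ge> 1 \<Longrightarrow>
        set_nn_integral lebesgue (ball 0 (2 * R)) (\<lambda>x. ennreal (w x powr T_p M p))
          \<le> ennreal (C * R powr \<mu>)"
  shows "\<not> (\<exists>u :: 'a \<Rightarrow> real. C1_fun u \<and> (\<forall>x. u x > 0) \<and> (\<forall>x. \<bar>u x\<bar> \<le> M)
              \<and> weak_solution p w g u \<and> stable p w g u)"
proof
  assume "\<exists>u :: 'a \<Rightarrow> real. C1_fun u \<and> (\<forall>x. u x > 0) \<and> (\<forall>x. \<bar>u x\<bar> \<le> M)
              \<and> weak_solution p w g u \<and> stable p w g u"
  then obtain u :: "'a \<Rightarrow> real" where uC1: "C1_fun u" and upos: "\<And>x. u x > 0"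
    and uM': "\<And>x. \<bar>u x\<bar> \<le> M" and weak: "weak_solution p w g u" by blast
  have uM: "\<And>x. u x \<le> M" using uM' by (metis abs_le_D1)
  have Mpos: "M > 0" using hp hM2 hM by (cases "p = 2") auto
  define T where "T = T_p M p"
  have tpos: "t_p M p > 0"
  proof (cases "p = 2")
    case True
    then show ?thesis using Mpos by (simp add: t_p_def add_pos_nonneg)
  next
    case False
    then have p2: "p > 2" using hp by simp
    then have M4: "M * (p - 1)\<^sup>2 < 4" using hM[OF p2] by (simp add: field_simps)
    have "(p - 1) / 2 < 2 / (M * (p - 1))"
      using M4 Mpos p2 by (simp add: field_simps power2_eq_square)
    then show ?thesis using False by (simp add: t_p_def)
  qed
  have T1: "T > 1" using tpos hp by (simp add: T_def T_p_def)
  obtain B0 where B0: "AE x in lebesgue. \<bar>1 / g x\<bar> \<le> B0" using hg(3) by (auto simp: Linf_def)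
  define B where "B = max B0 1"
  have B: "B > 0" by (simp add: B_def)
  have gB: "AE x in lebesgue. g x \<ge> 1 / B" using B0 hg(2)
  proof eventually_elim
    case (elim x)
    then have "1 / g x \<le> B" by (simp add: B_def)
    then show ?case using elim B by (simp add: field_simps)
  qed
  define k where "k = nat \<lceil>p\<rceil> + 2"
  have k: "k \<ge> 2" "real k \<ge> p" by (auto simp: k_def) linarith
  define N where "N = DIM('a)"
  define V where "V = unit_ball_vol (real DIM('a))"
  have mb: "measure lebesgue (ball (0::'a) r) = V * r ^ N" if "r \<ge> 0" for r
    using measure_leb_ball[OF that] by (simp add: V_def N_def)
  have Vpos: "V > 0" by (simp add: V_def)
  define K0 where "K0 = (2*M) powr (p-1) * real k powr p"
  have K0: "K0 \<ge> 0" by (simp add: K0_def)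
  define c0 where "c0 = (3/4)^k * V / B"
  define A1 where "A1 = 2 * K0 * V * 2 ^ N"
  define A2 where "A2 = 2 * K0 * C"
  have key: "c0 \<le> A1 * l * R powr (- p) + A2 * l powr (1 - T) * R powr (\<mu> - p)" if R: "R \<ge> 1" and l: "l > 0" for R l
  proof -
    have R0: "R > 0" using R by simp
    have RN: "R ^ N \<ge> 1" using R by simp
    define Rp where "Rp = R powr (- p)"
    have Rp0: "Rp \<ge> 0" by (simp add: Rp_def)
    have kR: "(real k / R) powr p = real k powr p * Rp"
    proof -
      have "(real k / R) powr p = real k powr p / R powr p" by (rule powr_divide)
      also have "\<dots> = real k powr p * Rp" using powr_minus[of R p] by (simp add: Rp_def divide_inverse)
      finally show ?thesis .
    qed
    have pr: "(3/4)^k * measure lebesgue (ball (0::'a) R)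
       \<le> B * (2 * ((2*M) powr (p-1) * (real k / R) powr p)) * (\<integral>x. w x * indicator (ball 0 (2*R)) x \<partial>lebesgue)"
      by (rule per_R[OF hp Mpos k hw(1) hw(2) hg(1) gB B uC1 upos uM weak R0])
    have wb: "(\<integral>x. w x * indicator (ball (0::'a) (2*R)) x \<partial>lebesgue)
        \<le> l * measure lebesgue (ball (0::'a) (2*R)) + l powr (1 - T) * (C * R powr \<mu>)"
      using hgrowth[OF R] hC unfolding T_def[symmetric]
      by (intro W_bound[OF hw(1) hw(2) T1[unfolded T_def] l, unfolded T_def[symmetric]]) auto
    have m1: "measure lebesgue (ball (0::'a) R) = V * R ^ N" using mb[of R] R0 by simp
    have m2: "measure lebesgue (ball (0::'a) (2*R)) = V * (2*R) ^ N" using mb[of "2*R"] R0 by simp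
    have "(3/4)^k * (V * R ^ N) \<le> B * (2 * K0 * Rp) * (l * (V * (2 * R) ^ N) + l powr (1 - T) * (C * R powr \<mu>))"
    proof -
      have "(3/4)^k * (V * R ^ N) \<le> B * (2 * K0 * Rp) * (\<integral>x. w x * indicator (ball 0 (2*R)) x \<partial>lebesgue)"
        using pr[unfolded m1 kR] by (simp add: K0_def mult.assoc)
      also have "\<dots> \<le> B * (2 * K0 * Rp) * (l * (V * (2 * R) ^ N) + l powr (1 - T) * (C * R powr \<mu>))"
        using wb[unfolded m2] B K0 Rp0 by (intro mult_left_mono) auto
      finally show ?thesis .
    qed
    also have "\<dots> = (B * R ^ N) * (A1 * l * Rp) + B * (2 * K0 * Rp) * (l powr (1 - T) * (C * R powr \<mu>))"
      by (simp add: A1_def power_mult_distrib algebra_simps)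
    also have "B * (2 * K0 * Rp) * (l powr (1 - T) * (C * R powr \<mu>)) \<le> (B * R ^ N) * (A2 * l powr (1 - T) * (Rp * R powr \<mu>))"
    proof -
      have "B * (2 * K0 * Rp) * (l powr (1 - T) * (C * R powr \<mu>)) = B * (A2 * l powr (1 - T) * (Rp * R powr \<mu>))"
        by (simp add: A2_def algebra_simps)
      also have "\<dots> \<le> (B * R ^ N) * (A2 * l powr (1 - T) * (Rp * R powr \<mu>))"
        using RN B K0 hC Rp0 by (intro mult_right_mono) (auto simp: A2_def)
      finally show ?thesis .
    qed
    finally have "(3/4)^k * V * R ^ N \<le> (B * R ^ N) * (A1 * l * Rp + A2 * l powr (1 - T) * (Rp * R powr \<mu>))"
      by (simp add: algebra_simps)
    then have "c0 * (B * R ^ N) \<le> (A1 * l * Rp + A2 * l powr (1 - T) * (Rp * R powr \<mu>)) * (B * R ^ N)"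
      using B by (simp add: c0_def algebra_simps)
    then have "c0 \<le> A1 * l * Rp + A2 * l powr (1 - T) * (Rp * R powr \<mu>)"
      using B RN by (subst (asm) mult_le_cancel_right_pos) auto
    also have "Rp * R powr \<mu> = R powr (\<mu> - p)" by (simp add: Rp_def powr_add[symmetric])
    finally show ?thesis by (simp add: Rp_def)
  qed
  have c0: "c0 > 0" using Vpos B by (simp add: c0_def)
  have A: "A1 \<ge> 0" "A2 \<ge> 0" using K0 Vpos hC by (auto simp: A1_def A2_def)
  show False
    by (rule final_contra[OF c0 A T1 h\<mu>(2)[folded T_def] key])
qed

end
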